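(* Let $n\ge1$ and $m\ge0$, and let $0$ denote the all-zero vertex of the Yoke graph $Y_{n,m}$. Then: (1) If $n=1$, then $\operatorname{ecc}_{Y_{n,m}}(0)=\binom{\lceil m/2\rceil+1}{2}+\binom{\lfloor m/2\rfloor+1}{2}$. (2) If $0\le m\le n$, then $\operatorname{ecc}_{Y_{n,m}}(0)=\lfloor n(m+1)/2\rfloor$. (3) If $2\le n\le m$, let $d_0=\binom{\lfloor (m+n)/2\rfloor+1}{2}+\binom{\lceil (m-n)/2\rceil+1}{2}$. Then (a) if either $2\mid(m-n)$ or $n\le\lceil (m+1)/2\rceil$, then $\operatorname{ecc}_{Y_{n,m}}(0)=d_0$; (b) otherwise $\operatorname{ecc}_{Y_{n,m}}(0)=d_0+n-\lceil (m+1)/2\rceil$.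
   Context: For integers $n\ge1$, $m\ge0$, the Yoke graph $Y_{n,m}$ is the simple graph whose vertices are the tuples $v=(v_0,v_1,\dots,v_m,v_{m+1})$ with $v_0,v_{m+1}\in\mathbb{Z}_n$ (the "buckets"), $v_1,\dots,v_m\in\{0,1\}$, and $\sum_{i=0}^{m+1}v_i\equiv 0\pmod n$ (buckets identified with their least non-negative representatives). Two vertices $u,v$ are adjacent iff there is $0\le i\le m$ such that $u_j=v_j$ for all $j\notin\{i,i+1\}$ and either ($u_i=v_i+1$ and $u_{i+1}=v_{i+1}-1$) or ($u_i=v_i-1$ and $u_{i+1}=v_{i+1}+1$), bucket entries computed modulo $n$. The eccentricity $\operatorname{ecc}_G(x)$ of a vertex $x$ is the maximum graph distance from $x$ to any vertex of $G$. *)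

theory Defs
  imports Main
begin

text \<open>A vertex of the Yoke graph Y(n,m) is represented as an integer list
  v = [v_0, v_1, ..., v_m, v_(m+1)] of length m+2; positions 0 and m+1 are the
  buckets (least non-negative residues mod n), the inner positions are 0/1.\<close>

definition yoke_vert :: "nat \<Rightarrow> nat \<Rightarrow> int list \<Rightarrow> bool" where
  "yoke_vert n m v \<longleftrightarrow>
     length v = m + 2 \<and>
     0 \<le> v ! 0 \<and> v ! 0 < int n \<and>
     0 \<le> v ! (m + 1) \<and> v ! (m + 1) < int n \<and>
     (\<forall>i. 1 \<le> i \<and> i \<le> m \<longrightarrow> v ! i \<in> {0, 1}) \<and>
     sum_list v mod int n = 0"

definition yoke_ent :: "nat \<Rightarrow> nat \<Rightarrow> nat \<Rightarrow> int \<Rightarrow> int" where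
  "yoke_ent n m j x = (if j = 0 \<or> j = m + 1 then x mod int n else x)"

definition yoke_adj :: "nat \<Rightarrow> nat \<Rightarrow> int list \<Rightarrow> int list \<Rightarrow> bool" where
  "yoke_adj n m u v \<longleftrightarrow>
     yoke_vert n m u \<and> yoke_vert n m v \<and> u \<noteq> v \<and>
     (\<exists>i \<le> m.
        (\<forall>j < m + 2. j \<noteq> i \<and> j \<noteq> i + 1 \<longrightarrow> u ! j = v ! j) \<and>
        ((u ! i = yoke_ent n m i (v ! i + 1) \<and>
          u ! (i + 1) = yoke_ent n m (i + 1) (v ! (i + 1) - 1)) \<or>
         (u ! i = yoke_ent n m i (v ! i - 1) \<and>
          u ! (i + 1) = yoke_ent n m (i + 1) (v ! (i + 1) + 1))))"

definition yoke_dist :: "nat \<Rightarrow> nat \<Rightarrow> int list \<Rightarrow> int list \<Rightarrow> nat" where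
  "yoke_dist n m u v = (LEAST k. (yoke_adj n m ^^ k) u v)"

definition yoke_ecc :: "nat \<Rightarrow> nat \<Rightarrow> int list \<Rightarrow> nat" where
  "yoke_ecc n m x = Max {yoke_dist n m x v | v. yoke_vert n m v}"

definition yoke_zero :: "nat \<Rightarrow> int list" where
  "yoke_zero m = replicate (m + 2) 0"

end

theory Submission
  imports Defs
begin

definition vtx :: "nat \<Rightarrow> nat \<Rightarrow> (nat \<Rightarrow> int) \<Rightarrow> int list" where
  "vtx n m f = map (\<lambda>j. if j = 0 then (- f 0) mod int n else if j = m+1 then f m mod int n
                        else f (j-1) - f j) [0..<m+2]"

definition valid :: "nat \<Rightarrow> (nat \<Rightarrow> int) \<Rightarrow> bool" where
  "valid m f \<longleftrightarrow> (\<forall>j<m. f j - f (Suc j) \<in> {0,1})"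

definition cost :: "nat \<Rightarrow> (nat \<Rightarrow> int) \<Rightarrow> int" where
  "cost m f = (\<Sum>j\<le>m. \<bar>f j\<bar>)"

lemma vtx_len[simp]: "length (vtx n m f) = m+2"
  by (simp add: vtx_def)

lemma vtx_nth: "j < m+2 \<Longrightarrow> vtx n m f ! j = (if j = 0 then (- f 0) mod int n else if j = m+1 then f m mod int n
                        else f (j-1) - f j)"
  unfolding vtx_def by (simp del: upt_Suc)

lemma vtx_cong: "(\<And>j. j \<le> m \<Longrightarrow> f j = g j) \<Longrightarrow> vtx n m f = vtx n m g"
  by (intro nth_equalityI) (auto simp: vtx_nth)

lemma vtx_shift: "vtx n m (\<lambda>j. f j + t * int n) = vtx n m f"
proof (intro nth_equalityI)
  fix j assume "j < length (vtx n m (\<lambda>j. f j + t * int n))"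
  then have j: "j < m+2" by simp
  have "(- (f 0 + t * int n)) mod int n = (- f 0) mod int n"
    by (metis add.commute minus_add_distrib mod_mult_self3 mult.commute mult_minus_left)
  moreover have "(f m + t * int n) mod int n = f m mod int n" by simp
  ultimately show "vtx n m (\<lambda>j. f j + t * int n) ! j = vtx n m f ! j"
    using j by (simp add: vtx_nth)
qed simp

lemma zero_vtx: "yoke_zero m = vtx n m (\<lambda>_. 0)"
proof (intro nth_equalityI)
  fix j assume "j < length (yoke_zero m)"
  then have j: "j < m+2" by (simp add: yoke_zero_def)
  have "yoke_zero m ! j = 0" using j unfolding yoke_zero_def by (rule nth_replicate)
  then show "yoke_zero m ! j = vtx n m (\<lambda>_. 0) ! j" using j by (simp add: vtx_nth)
qed (simp add: yoke_zero_def)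

lemma valid_mono: "valid m f \<Longrightarrow> j \<le> l \<Longrightarrow> l \<le> m \<Longrightarrow> f l \<le> f j"
proof (induction l)
  case 0 then show ?case by simp
next
  case (Suc l)
  show ?case
  proof (cases "j = Suc l")
    case False
    then have "j \<le> l" using Suc by simp
    then have "f l \<le> f j" using Suc by simp
    moreover have "f l - f (Suc l) \<in> {0,1}" using Suc.prems unfolding valid_def by auto
    ultimately show ?thesis by auto
  qed simp
qed

lemma vtx_vert:
  assumes n: "n \<ge> 1" and v: "valid m f"
  shows "yoke_vert n m (vtx n m f)"
proof -
  let ?h = "\<lambda>j. if j = 0 then (- f 0) mod int n else if j = m+1 then f m mod int n else f (j-1) - f j"
  have sl: "sum_list (vtx n m f) = (\<Sum>j<m+2. ?h j)"
    unfolding vtx_def by (simp add: interv_sum_list_conv_sum_set_nat atLeast0LessThan del: upt_Suc)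
  have "(\<Sum>j<m+2. ?h j) = (\<Sum>j<Suc m. ?h j) + ?h (m+1)" by simp
  also have "(\<Sum>j<Suc m. ?h j) = ?h 0 + (\<Sum>j<m. ?h (Suc j))"
    by (rule sum.lessThan_Suc_shift)
  also have "(\<Sum>j<m. ?h (Suc j)) = (\<Sum>j<m. f j - f (Suc j))"
    by (rule sum.cong) auto
  also have "\<dots> = f 0 - f m"
    using sum_lessThan_telescope'[of f m] by simp
  finally have S: "sum_list (vtx n m f) = (- f 0) mod int n + (f 0 - f m) + f m mod int n"
    using sl by simp
  have "sum_list (vtx n m f) mod int n = ((- f 0) + (f 0 - f m) + f m) mod int n"
    unfolding S by (simp add: mod_simps)
  then have sm: "sum_list (vtx n m f) mod int n = 0" by simp
  show ?thesis
    unfolding yoke_vert_def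
  proof (intro conjI allI impI)
    fix i assume i: "1 \<le> i \<and> i \<le> m"
    then have "i - 1 < m" by linarith
    then have "f (i-1) - f (Suc (i-1)) \<in> {0,1}" using v unfolding valid_def by blast
    moreover have e: "Suc (i-1) = i" using i by simp
    ultimately have "f (i-1) - f i \<in> {0,1}" by simp
    then show "vtx n m f ! i \<in> {0,1}" using i by (simp add: vtx_nth)
  qed (use n sm in \<open>auto simp: vtx_nth\<close>)
qed

lemma mod_back:
  fixes w a d :: int
  assumes "0 \<le> w" "w < N" "a mod N = (w + d) mod N"
  shows "w = (a - d) mod N"
proof -
  have "(a - d) mod N = ((w + d) - d) mod N"
    using assms(3) by (metis mod_diff_left_eq)
  then show ?thesis using assms(1,2) by simp
qed

lemma vert_vtx:
  assumes n: "n \<ge> 1" and v: "yoke_vert n m v"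
  shows "\<exists>f. valid m f \<and> v = vtx n m f"
proof -
  define f where "f j = - v!0 - (\<Sum>l<j. v!(Suc l))" for j
  have fs: "f j - f (Suc j) = v ! (Suc j)" for j by (simp add: f_def)
  have len: "length v = m+2" using v by (simp add: yoke_vert_def)
  have valid: "valid m f"
    unfolding valid_def
  proof (intro allI impI)
    fix j assume "j < m"
    then have "v ! Suc j \<in> {0,1}" using v unfolding yoke_vert_def by auto
    then show "f j - f (Suc j) \<in> {0,1}" by (simp add: fs)
  qed
  have sl: "sum_list v = (\<Sum>j<m+2. v!j)"
    by (simp add: sum_list_sum_nth len atLeast0LessThan)
  have "(\<Sum>j<m+2. v!j) = (\<Sum>j<Suc m. v!j) + v!(m+1)" by simp
  also have "(\<Sum>j<Suc m. v!j) = v!0 + (\<Sum>j<m. v!(Suc j))"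
    by (rule sum.lessThan_Suc_shift)
  finally have sl2: "sum_list v = v!0 + (\<Sum>j<m. v!(Suc j)) + v!(m+1)" using sl by simp
  have sm: "sum_list v mod int n = 0" using v by (simp add: yoke_vert_def)
  have b1: "0 \<le> v!(m+1)" "v!(m+1) < int n" "0 \<le> v!0" "v!0 < int n"
    using v by (auto simp: yoke_vert_def)
  have fm: "f m = v!(m+1) - sum_list v" using sl2 by (simp add: f_def)
  have "f m mod int n = v!(m+1) mod int n"
  proof -
    have "(v!(m+1) - sum_list v) mod int n = (v!(m+1) - 0) mod int n"
      using mod_diff_right_eq[of "v!(m+1)" "sum_list v" "int n"] sm by simp
    then show ?thesis using fm by simp
  qed
  also have "\<dots> = v!(m+1)" using b1 by simp
  finally have fmm: "f m mod int n = v!(m+1)" .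
  have f0: "(- f 0) mod int n = v!0" using b1 by (simp add: f_def)
  have "v = vtx n m f"
  proof (intro nth_equalityI)
    fix j assume "j < length v"
    then have j: "j < m+2" using len by simp
    show "v ! j = vtx n m f ! j"
    proof (cases "j = 0 \<or> j = m+1")
      case True then show ?thesis using j fmm f0 by (auto simp: vtx_nth)
    next
      case False
      then have "Suc (j-1) = j" by simp
      then have "f (j-1) - f j = v ! j" using fs[of "j-1"] by simp
      then show ?thesis using j False by (simp add: vtx_nth)
    qed
  qed (simp add: len)
  then show ?thesis using valid by blast
qed

lemma vtx_eq_shift:
  assumes n: "n \<ge> 1" and e: "vtx n m g = vtx n m f"
  shows "(\<forall>j\<le>m. g j = f j + (g 0 - f 0)) \<and> int n dvd (g 0 - f 0)"
proof
  have inner: "g (j-1) - g j = f (j-1) - f j" if "1 \<le> j" "j \<le> m" for j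
  proof -
    have "vtx n m g ! j = vtx n m f ! j" using e by simp
    then show ?thesis using that by (simp add: vtx_nth)
  qed
  show "\<forall>j\<le>m. g j = f j + (g 0 - f 0)"
  proof (intro allI impI)
    fix j assume "j \<le> m"
    then show "g j = f j + (g 0 - f 0)"
    proof (induction j)
      case (Suc j)
      then have "g j = f j + (g 0 - f 0)" by simp
      moreover have "g (Suc j - 1) - g (Suc j) = f (Suc j - 1) - f (Suc j)"
        using inner[of "Suc j"] Suc.prems by simp
      ultimately show ?case by simp
    qed simp
  qed
  have "vtx n m g ! 0 = vtx n m f ! 0" using e by simp
  then have "(- g 0) mod int n = (- f 0) mod int n" by (simp add: vtx_nth)
  then have "int n dvd (- g 0 - - f 0)" by (simp add: mod_eq_dvd_iff)
  then show "int n dvd (g 0 - f 0)"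
    using dvd_minus_iff[of "int n" "g 0 - f 0"] by simp
qed

lemma vtx_same:
  assumes "j < m+2" "j \<noteq> i" "j \<noteq> i+1"
  shows "vtx n m (f(i := x)) ! j = vtx n m f ! j"
  using assms by (auto simp: vtx_nth)

lemma adj_construct:
  assumes n: "n \<ge> 1" and vf: "valid m f" and vg: "valid m g" and i: "i \<le> m"
    and g: "g = f(i := f i + 1)" and ne: "vtx n m f \<noteq> vtx n m g"
  shows "yoke_adj n m (vtx n m f) (vtx n m g) \<and> yoke_adj n m (vtx n m g) (vtx n m f)"
proof -
  have same: "\<forall>j<m+2. j \<noteq> i \<and> j \<noteq> i+1 \<longrightarrow> vtx n m f ! j = vtx n m g ! j"
    using g vtx_same by auto
  have ei: "vtx n m f ! i = yoke_ent n m i (vtx n m g ! i + 1) \<and>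
            vtx n m g ! i = yoke_ent n m i (vtx n m f ! i - 1)"
  proof (cases "i = 0")
    case True
    have "(- f 0) mod int n = ((- (f 0 + 1)) mod int n + 1) mod int n"
      by (simp add: mod_simps)
    moreover have "(- (f 0 + 1)) mod int n = ((- f 0) mod int n - 1) mod int n"
      by (simp add: mod_simps)
    ultimately show ?thesis using True g by (simp add: vtx_nth yoke_ent_def)
  next
    case False
    then show ?thesis using g i by (simp add: vtx_nth yoke_ent_def)
  qed
  have ei1: "vtx n m f ! (i+1) = yoke_ent n m (i+1) (vtx n m g ! (i+1) - 1) \<and>
            vtx n m g ! (i+1) = yoke_ent n m (i+1) (vtx n m f ! (i+1) + 1)"
  proof (cases "i = m")
    case True
    have "f m mod int n = ((f m + 1) mod int n - 1) mod int n"
      by (simp add: mod_simps)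
    moreover have "(f m + 1) mod int n = (f m mod int n + 1) mod int n"
      by (simp add: mod_simps)
    ultimately show ?thesis using True g by (simp add: vtx_nth yoke_ent_def)
  next
    case False
    then show ?thesis using g i by (simp add: vtx_nth yoke_ent_def)
  qed
  have V: "yoke_vert n m (vtx n m f)" "yoke_vert n m (vtx n m g)"
    using vtx_vert n vf vg by auto
  have s2: "\<forall>j<m+2. j \<noteq> i \<and> j \<noteq> i+1 \<longrightarrow> vtx n m g ! j = vtx n m f ! j"
    using same by auto
  have ne2: "vtx n m g \<noteq> vtx n m f" using ne by simp
  have A1: "yoke_adj n m (vtx n m f) (vtx n m g)"
    unfolding yoke_adj_def
    by (intro conjI V ne exI[of _ i] disjI1 i same ei[THEN conjunct1] ei1[THEN conjunct1])
  have A2: "yoke_adj n m (vtx n m g) (vtx n m f)"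
    unfolding yoke_adj_def
    by (intro conjI V ne2 exI[of _ i] disjI2 i s2 ei[THEN conjunct2] ei1[THEN conjunct2])
  show ?thesis using A1 A2 by blast
qed

lemma adj_invert_aux:
  assumes n: "n \<ge> 1" and w: "yoke_vert n m w" and i: "i \<le> m"
    and same: "\<forall>j<m+2. j \<noteq> i \<and> j \<noteq> i+1 \<longrightarrow> vtx n m f ! j = w ! j"
    and e1: "vtx n m f ! i = yoke_ent n m i (w ! i + d)"
    and e2: "vtx n m f ! (i+1) = yoke_ent n m (i+1) (w ! (i+1) - d)"
  shows "w = vtx n m (f(i := f i + d))"
proof (intro nth_equalityI)
  have len: "length w = m+2" using w by (simp add: yoke_vert_def)
  then show "length w = length (vtx n m (f(i := f i + d)))" by simp
  fix j assume "j < length w"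
  then have j: "j < m+2" using len by simp
  have b: "0 \<le> w!0" "w!0 < int n" "0 \<le> w!(m+1)" "w!(m+1) < int n"
    using w by (auto simp: yoke_vert_def)
  show "w ! j = vtx n m (f(i := f i + d)) ! j"
  proof (cases "j = i")
    case True
    show ?thesis
    proof (cases "i = 0")
      case True
      have "(- f 0) mod int n = (w!0 + d) mod int n"
        using e1 True by (simp add: vtx_nth yoke_ent_def)
      then have "w!0 = (- f 0 - d) mod int n" using mod_back b by blast
      then show ?thesis using True \<open>j = i\<close> by (simp add: vtx_nth)
    next
      case False
      then have "i - Suc 0 \<noteq> i" by simp
      then show ?thesis using e1 \<open>j = i\<close> i False by (simp add: vtx_nth yoke_ent_def)
    qed
  next
    case ji: False
    show ?thesis
    proof (cases "j = i+1")
      case True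
      show ?thesis
      proof (cases "i = m")
        case True
        have "f m mod int n = (w!(m+1) + - d) mod int n"
          using e2 True by (simp add: vtx_nth yoke_ent_def)
        then have "w!(m+1) = (f m - - d) mod int n" using mod_back b by blast
        then show ?thesis using True \<open>j = i+1\<close> by (simp add: vtx_nth)
      next
        case False
        then show ?thesis using e2 \<open>j = i+1\<close> i by (simp add: vtx_nth yoke_ent_def)
      qed
    next
      case False
      then show ?thesis using same j ji vtx_same by metis
    qed
  qed
qed

lemma cost_upd: "i \<le> m \<Longrightarrow> \<bar>d\<bar> \<le> 1 \<Longrightarrow> cost m (f(i := f i + d)) \<le> cost m f + 1"
proof -
  assume i: "i \<le> m" and d: "\<bar>d\<bar> \<le> 1"
  have "cost m (f(i := f i + d)) \<le> (\<Sum>j\<le>m. \<bar>f j\<bar> + (if j = i then 1 else 0))"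
    unfolding cost_def by (rule sum_mono) (use d in auto)
  also have "\<dots> = cost m f + 1" using i by (simp add: sum.distrib cost_def)
  finally show ?thesis .
qed

lemma adj_invert:
  assumes n: "n \<ge> 1" and a: "yoke_adj n m (vtx n m f) w"
  shows "\<exists>g. w = vtx n m g \<and> cost m g \<le> cost m f + 1"
proof -
  have w: "yoke_vert n m w" using a by (simp add: yoke_adj_def)
  obtain i where i: "i \<le> m"
    and same: "\<forall>j<m+2. j \<noteq> i \<and> j \<noteq> i+1 \<longrightarrow> vtx n m f ! j = w ! j"
    and dis: "(vtx n m f ! i = yoke_ent n m i (w ! i + 1) \<and>
          vtx n m f ! (i + 1) = yoke_ent n m (i + 1) (w ! (i + 1) - 1)) \<or>
         (vtx n m f ! i = yoke_ent n m i (w ! i - 1) \<and>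
          vtx n m f ! (i + 1) = yoke_ent n m (i + 1) (w ! (i + 1) + 1))"
    using a unfolding yoke_adj_def by blast
  from dis show ?thesis
  proof
    assume h: "vtx n m f ! i = yoke_ent n m i (w ! i + 1) \<and>
          vtx n m f ! (i + 1) = yoke_ent n m (i + 1) (w ! (i + 1) - 1)"
    have "w = vtx n m (f(i := f i + 1))"
      by (rule adj_invert_aux[OF n w i same]) (use h in auto)
    moreover have "cost m (f(i := f i + 1)) \<le> cost m f + 1" using cost_upd i by simp
    ultimately show ?thesis by blast
  next
    assume h: "vtx n m f ! i = yoke_ent n m i (w ! i - 1) \<and>
          vtx n m f ! (i + 1) = yoke_ent n m (i + 1) (w ! (i + 1) + 1)"
    have "w = vtx n m (f(i := f i + -1))"
      by (rule adj_invert_aux[OF n w i same]) (use h in auto)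
    moreover have "cost m (f(i := f i + -1)) \<le> cost m f + 1" using cost_upd[of i m "-1" f] i by simp
    ultimately show ?thesis by blast
  qed
qed

lemma walk_cost:
  assumes n: "n \<ge> 1"
  shows "(yoke_adj n m ^^ k) (yoke_zero m) v \<Longrightarrow> \<exists>f. v = vtx n m f \<and> cost m f \<le> int k"
proof (induction k arbitrary: v)
  case 0
  then have "v = vtx n m (\<lambda>_. 0)" using zero_vtx by simp
  moreover have "cost m (\<lambda>_. 0) = 0" by (simp add: cost_def)
  ultimately show ?case by auto
next
  case (Suc k)
  from Suc.prems obtain y where y: "(yoke_adj n m ^^ k) (yoke_zero m) y" and a: "yoke_adj n m y v"
    by (rule relpowp_Suc_E)
  obtain f where f: "y = vtx n m f" "cost m f \<le> int k" using Suc.IH y by blast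
  obtain g where "v = vtx n m g" "cost m g \<le> cost m f + 1" using adj_invert[OF n] a f by blast
  then show ?case using f by auto
qed

lemma cost_nonneg: "cost m f \<ge> 0" by (simp add: cost_def sum_nonneg)

lemma cost_dec:
  assumes i: "i \<le> m" and d: "\<bar>f i + d\<bar> = \<bar>f i\<bar> - 1"
  shows "cost m (f(i := f i + d)) = cost m f - 1"
proof -
  have "cost m (f(i := f i + d)) = (\<Sum>j\<le>m. \<bar>f j\<bar> - (if j = i then 1 else 0))"
    unfolding cost_def by (rule sum.cong) (use d in auto)
  also have "\<dots> = cost m f - 1" using i by (simp add: sum_subtractf cost_def)
  finally show ?thesis .
qed

lemma step_exists:
  assumes v: "valid m f" and c: "cost m f > 0"
  shows "\<exists>g i. i \<le> m \<and> valid m g \<and> cost m g = cost m f - 1 \<and>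
             (g = f(i := f i + 1) \<or> f = g(i := g i + 1))"
proof (cases "f 0 > 0")
  case pos: True
  define P where "P j \<longleftrightarrow> j \<le> m \<and> (j = m \<or> f (Suc j) \<noteq> f j)" for j
  have Pm: "P m" by (simp add: P_def)
  define i where "i = Least P"
  have Pi: "P i" unfolding i_def using Pm by (rule LeastI)
  have lt: "j < i \<Longrightarrow> \<not> P j" for j unfolding i_def by (rule not_less_Least)
  have im: "i \<le> m" using Pi by (simp add: P_def)
  have flat: "j \<le> i \<Longrightarrow> f j = f 0" for j
  proof (induction j)
    case (Suc j)
    then have "\<not> P j" using lt by simp
    then have "f (Suc j) = f j" using Suc.prems im by (simp add: P_def)
    then show ?case using Suc by simp
  qed simp
  have nxt: "i < m \<Longrightarrow> f (Suc i) = f i - 1"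
  proof -
    assume "i < m"
    then have "f i - f (Suc i) \<in> {0,1}" "f (Suc i) \<noteq> f i" using v Pi by (auto simp: valid_def P_def)
    then show ?thesis by auto
  qed
  define g where "g = f(i := f i + -1)"
  have fi: "f i = f 0" using flat[of i] by simp
  have vg: "valid m g"
    unfolding valid_def
  proof (intro allI impI)
    fix j assume j: "j < m"
    show "g j - g (Suc j) \<in> {0,1}"
    proof (cases "j = i")
      case True then show ?thesis using nxt j by (simp add: g_def)
    next
      case False
      show ?thesis
      proof (cases "Suc j = i")
        case True
        then have "f j = f i" using flat[of j] fi by simp
        then show ?thesis using True by (simp add: g_def)
      next
        case False
        then show ?thesis using \<open>j \<noteq> i\<close> v j by (simp add: g_def valid_def)
      qed
    qed
  qed
  have cg: "cost m g = cost m f - 1" unfolding g_def by (rule cost_dec[OF im]) (use pos fi in simp)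
  have "f = g(i := g i + 1)" by (simp add: g_def)
  then show ?thesis using im vg cg by blast
next
  case nonpos: False
  obtain j0 where j0: "j0 \<le> m" "f j0 \<noteq> 0"
  proof (rule ccontr)
    assume "\<not> thesis"
    then have "\<forall>j\<le>m. f j = 0" using that by blast
    then have "cost m f = 0" by (simp add: cost_def)
    then show False using c by simp
  qed
  have "f j0 \<le> f 0" using valid_mono[OF v _ j0(1)] by simp
  then have "f j0 < 0" using nonpos j0 by simp
  then have fmneg: "f m < 0" using valid_mono[OF v j0(1)] by simp
  define P where "P j \<longleftrightarrow> j \<le> m \<and> (\<forall>l. j \<le> l \<and> l \<le> m \<longrightarrow> f l = f m)" for j
  have Pm: "P m" by (auto simp: P_def)
  define i where "i = Least P"
  have Pi: "P i" unfolding i_def using Pm by (rule LeastI)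
  have lt: "j < i \<Longrightarrow> \<not> P j" for j unfolding i_def by (rule not_less_Least)
  have im: "i \<le> m" using Pi by (simp add: P_def)
  have Pall: "\<And>l. i \<le> l \<Longrightarrow> l \<le> m \<Longrightarrow> f l = f m" using Pi unfolding P_def by blast
  have fi: "f i = f m" using Pall[of i] im by simp
  have nxt: "i < m \<Longrightarrow> f (Suc i) = f i" using Pall[of "Suc i"] fi by simp
  have prv: "0 < i \<Longrightarrow> f (i - 1) = f i + 1"
  proof -
    assume i0: "0 < i"
    then have "\<not> P (i - 1)" using lt by simp
    then obtain l where l: "i - 1 \<le> l" "l \<le> m" "f l \<noteq> f m" using im by (auto simp: P_def)
    have "l = i - 1"
    proof (rule ccontr)
      assume "l \<noteq> i - 1"
      then have "i \<le> l" using l by simp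
      then show False using Pall[of l] l by simp
    qed
    then have ne: "f (i-1) \<noteq> f i" using l fi by simp
    have "i - 1 < m" using i0 im by simp
    then have "f (i-1) - f (Suc (i-1)) \<in> {0,1}" using v by (simp add: valid_def)
    then show ?thesis using ne i0 by auto
  qed
  define g where "g = f(i := f i + 1)"
  have vg: "valid m g"
    unfolding valid_def
  proof (intro allI impI)
    fix j assume j: "j < m"
    show "g j - g (Suc j) \<in> {0,1}"
    proof (cases "j = i")
      case True then show ?thesis using nxt j by (simp add: g_def)
    next
      case False
      show ?thesis
      proof (cases "Suc j = i")
        case True
        then have "f j = f i + 1" using prv by force
        then show ?thesis using True by (simp add: g_def)
      next
        case False
        then show ?thesis using \<open>j \<noteq> i\<close> v j by (simp add: g_def valid_def)
      qed
    qed
  qed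
  have cg: "cost m g = cost m f - 1" unfolding g_def by (rule cost_dec[OF im]) (use fmneg fi in simp)
  then show ?thesis using im vg g_def by blast
qed

lemma walk_exists:
  assumes n: "n \<ge> 1"
  shows "valid m f \<Longrightarrow> \<exists>k. int k \<le> cost m f \<and> (yoke_adj n m ^^ k) (yoke_zero m) (vtx n m f)"
proof (induction "nat (cost m f)" arbitrary: f)
  case 0
  then have "cost m f = 0" using cost_nonneg[of m f] by simp
  then have "\<forall>j\<le>m. f j = 0" unfolding cost_def by (simp add: sum_nonneg_eq_0_iff)
  then have "vtx n m f = vtx n m (\<lambda>_. 0)" by (intro vtx_cong) simp
  then have "(yoke_adj n m ^^ 0) (yoke_zero m) (vtx n m f)" using zero_vtx by simp
  moreover have "int 0 \<le> cost m f" using cost_nonneg[of m f] by simp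
  ultimately show ?case by blast
next
  case (Suc N)
  then have "cost m f > 0" by simp
  then obtain g i where gi: "i \<le> m" "valid m g" "cost m g = cost m f - 1"
    "g = f(i := f i + 1) \<or> f = g(i := g i + 1)"
    using step_exists Suc.prems by blast
  have "N = nat (cost m g)" using gi(3) Suc.hyps(2) by simp
  then obtain k where k: "int k \<le> cost m g" "(yoke_adj n m ^^ k) (yoke_zero m) (vtx n m g)"
    using Suc.hyps(1) gi(2) by blast
  show ?case
  proof (cases "vtx n m g = vtx n m f")
    case True
    have "int k \<le> cost m f" using k(1) gi(3) by simp
    then show ?thesis using k(2) True by auto
  next
    case False
    have "yoke_adj n m (vtx n m g) (vtx n m f)"
      using gi(4)
    proof
      assume "g = f(i := f i + 1)"
      then show ?thesis using adj_construct[OF n Suc.prems gi(2) gi(1)] False by auto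
    next
      assume "f = g(i := g i + 1)"
      then show ?thesis using adj_construct[OF n gi(2) Suc.prems gi(1)] False by auto
    qed
    then have "(yoke_adj n m ^^ Suc k) (yoke_zero m) (vtx n m f)" using k(2) by (rule relpowp_Suc_I[rotated])
    then show ?thesis using k gi(3) by (intro exI[of _ "Suc k"]) simp
  qed
qed

definition Sid :: "nat \<Rightarrow> int \<Rightarrow> int" where
  "Sid m c = (\<Sum>j\<le>m. \<bar>c - int j\<bar>)"

lemma Sid_Suc: "Sid (Suc m) c = Sid m c + \<bar>c - int (Suc m)\<bar>"
  by (simp add: Sid_def)

lemma Sid_left: "c \<le> 0 \<Longrightarrow> 2 * Sid m c = (int m + 1) * (int m - 2 * c)"
proof (induction m)
  case 0 then show ?case by (simp add: Sid_def)
next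
  case (Suc m)
  then show ?case by (simp add: Sid_Suc algebra_simps)
qed

lemma Sid_right: "c \<ge> int m \<Longrightarrow> 2 * Sid m c = (int m + 1) * (2 * c - int m)"
proof (induction m)
  case 0 then show ?case by (simp add: Sid_def)
next
  case (Suc m)
  then show ?case by (simp add: Sid_Suc algebra_simps)
qed

lemma Sid_mid: "-1 \<le> c \<Longrightarrow> c \<le> int m + 1 \<Longrightarrow> 2 * Sid m c = c * (c + 1) + (int m - c) * (int m - c + 1)"
proof (induction m)
  case 0
  then have "c = -1 \<or> c = 0 \<or> c = 1" by auto
  then show ?case by (auto simp: Sid_def)
next
  case (Suc m)
  show ?case
  proof (cases "c \<le> int m + 1")
    case True
    then show ?thesis using Suc by (simp add: Sid_Suc algebra_simps)
  next
    case False
    then have c: "c = int m + 2" using Suc.prems by simp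
    have "2 * Sid (Suc m) c = (int (Suc m) + 1) * (2 * c - int (Suc m))"
      by (rule Sid_right) (use c in simp)
    then show ?thesis using c by (simp add: algebra_simps)
  qed
qed

lemma Sid_lip: "Sid m x \<le> Sid m y + (int m + 1) * \<bar>x - y\<bar>"
proof -
  have "Sid m x \<le> (\<Sum>j\<le>m. \<bar>y - int j\<bar> + \<bar>x - y\<bar>)"
    unfolding Sid_def by (rule sum_mono) linarith
  also have "\<dots> = Sid m y + (int m + 1) * \<bar>x - y\<bar>"
    by (simp add: sum.distrib Sid_def)
  finally show ?thesis .
qed

definition Fp :: "nat \<Rightarrow> (nat \<Rightarrow> int) \<Rightarrow> int \<Rightarrow> int" where
  "Fp m p c = (\<Sum>j\<le>m. \<bar>c - p j\<bar>)"

definition pvalid :: "nat \<Rightarrow> (nat \<Rightarrow> int) \<Rightarrow> bool" where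
  "pvalid m p \<longleftrightarrow> p 0 = 0 \<and> (\<forall>j<m. p (Suc j) - p j \<in> {0,1})"

definition Lx :: "nat \<Rightarrow> (nat \<Rightarrow> int) \<Rightarrow> int \<Rightarrow> int" where
  "Lx m p k = (if k < 0 then k else if k \<le> int m then p (nat k) else k - int m + p m)"

lemma Lx_at: "j \<le> m \<Longrightarrow> Lx m p (int j) = p j"
  by (simp add: Lx_def)

lemma Lx_step:
  assumes pv: "pvalid m p"
  shows "Lx m p (k+1) - Lx m p k \<in> {0,1}"
proof -
  have p0: "p 0 = 0" using pv by (simp add: pvalid_def)
  consider "k < -1" | "k = -1" | "0 \<le> k \<and> k < int m" | "k = int m" | "k > int m" by linarith
  then show ?thesis
  proof cases
    case 3
    then have "nat (k+1) = Suc (nat k)" "nat k < m" by auto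
    then show ?thesis using 3 pv by (simp add: Lx_def pvalid_def)
  qed (use p0 in \<open>auto simp: Lx_def\<close>)
qed

lemma Lx_mono2:
  assumes pv: "pvalid m p" and ab: "a \<le> b"
  shows "0 \<le> Lx m p b - Lx m p a \<and> Lx m p b - Lx m p a \<le> b - a"
proof -
  obtain d where b: "b = a + int d" using ab by (metis zle_iff_zadd)
  have "0 \<le> Lx m p (a + int d) - Lx m p a \<and> Lx m p (a + int d) - Lx m p a \<le> int d"
  proof (induction d)
    case (Suc d)
    have e: "a + int (Suc d) = (a + int d) + 1" by simp
    have "Lx m p (a + int (Suc d)) - Lx m p (a + int d) \<in> {0,1}" unfolding e by (rule Lx_step[OF pv])
    then show ?case using Suc by auto
  qed simp
  then show ?thesis using b by simp
qed

lemma Lx_ivt: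
  assumes pv: "pvalid m p" and ab: "a \<le> b" and y: "Lx m p a \<le> y" "y \<le> Lx m p b"
  shows "\<exists>k. a \<le> k \<and> k \<le> b \<and> Lx m p k = y"
proof -
  obtain d where b: "b = a + int d" using ab by (metis zle_iff_zadd)
  have "y \<le> Lx m p (a + int d) \<Longrightarrow> \<exists>k. a \<le> k \<and> k \<le> a + int d \<and> Lx m p k = y"
  proof (induction d)
    case 0 then show ?case using y(1) by (intro exI[of _ a]) simp
  next
    case (Suc d)
    show ?case
    proof (cases "y \<le> Lx m p (a + int d)")
      case True
      then show ?thesis using Suc.IH by force
    next
      case False
      have e: "a + int (Suc d) = (a + int d) + 1" by simp
      have "Lx m p (a + int (Suc d)) - Lx m p (a + int d) \<in> {0,1}" unfolding e by (rule Lx_step[OF pv])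
      then have "Lx m p (a + int (Suc d)) = y" using False Suc.prems by auto
      then show ?thesis by (intro exI[of _ "a + int (Suc d)"]) simp
    qed
  qed
  then show ?thesis using b y(2) by simp
qed

lemma Lx_abs: "pvalid m p \<Longrightarrow> \<bar>Lx m p x - Lx m p y\<bar> \<le> \<bar>x - y\<bar>"
  using Lx_mono2[of m p x y] Lx_mono2[of m p y x] by (cases "x \<le> y") auto

lemma Fp_Lx_le:
  assumes pv: "pvalid m p"
  shows "Fp m p (Lx m p k) \<le> Sid m k"
  unfolding Fp_def Sid_def
proof (rule sum_mono)
  fix j assume "j \<in> {..m}"
  then have "p j = Lx m p (int j)" by (simp add: Lx_at)
  then show "\<bar>Lx m p k - p j\<bar> \<le> \<bar>k - int j\<bar>" using Lx_abs[OF pv, of k "int j"] by simp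
qed

lemma Fp_pair:
  assumes pv: "pvalid m p" and k: "k1 \<le> k2"
  shows "Fp m p (Lx m p k1) + Fp m p (Lx m p k2) \<le>
         Sid m k1 + Sid m k2 - (int m + 1) * ((k2 - k1) - (Lx m p k2 - Lx m p k1))"
proof -
  let ?L = "Lx m p"
  let ?z = "(k2 - k1) - (?L k2 - ?L k1)"
  have t: "\<bar>?L k1 - p j\<bar> + \<bar>?L k2 - p j\<bar> \<le> \<bar>k1 - int j\<bar> + \<bar>k2 - int j\<bar> - ?z"
    if "j \<le> m" for j
  proof -
    have pj: "p j = ?L (int j)" using that by (simp add: Lx_at)
    have m12: "0 \<le> ?L k2 - ?L k1 \<and> ?L k2 - ?L k1 \<le> k2 - k1" using Lx_mono2[OF pv k] .
    consider "int j \<le> k1" | "k1 \<le> int j \<and> int j \<le> k2" | "k2 \<le> int j" by linarith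
    then show ?thesis
    proof cases
      case 1
      have "0 \<le> ?L k1 - ?L (int j) \<and> ?L k1 - ?L (int j) \<le> k1 - int j" using Lx_mono2[OF pv 1] .
      then show ?thesis using pj m12 1 k by (simp add: abs_if)
    next
      case 2
      have "0 \<le> ?L (int j) - ?L k1 \<and> ?L (int j) - ?L k1 \<le> int j - k1" using Lx_mono2[OF pv] 2 by blast
      moreover have "0 \<le> ?L k2 - ?L (int j) \<and> ?L k2 - ?L (int j) \<le> k2 - int j" using Lx_mono2[OF pv] 2 by blast
      ultimately show ?thesis using pj m12 2 k by (simp add: abs_if)
    next
      case 3
      have "0 \<le> ?L (int j) - ?L k2 \<and> ?L (int j) - ?L k2 \<le> int j - k2" using Lx_mono2[OF pv 3] .
      then show ?thesis using pj m12 3 k by (simp add: abs_if)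
    qed
  qed
  have "Fp m p (?L k1) + Fp m p (?L k2) = (\<Sum>j\<le>m. \<bar>?L k1 - p j\<bar> + \<bar>?L k2 - p j\<bar>)"
    by (simp add: Fp_def sum.distrib)
  also have "\<dots> \<le> (\<Sum>j\<le>m. \<bar>k1 - int j\<bar> + \<bar>k2 - int j\<bar> - ?z)"
    by (rule sum_mono) (use t in auto)
  also have "\<dots> = Sid m k1 + Sid m k2 - (int m + 1) * ?z"
    by (simp add: sum.distrib sum_subtractf Sid_def)
  finally show ?thesis .
qed

lemma good_shift:
  assumes n: "n \<ge> 1" and g: "c mod int n = r mod int n" and F: "Fp m p c \<le> X"
  shows "\<exists>t. Fp m p (r + t * int n) \<le> X"
proof -
  have "int n dvd (c - r)" using g by (simp add: mod_eq_dvd_iff)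
  then obtain t where t: "c - r = int n * t" by (rule dvdE)
  then have "r + t * int n = c" by (simp add: algebra_simps)
  then show ?thesis using F by metis
qed

lemma UB_general:
  fixes \<alpha> \<beta> D :: int
  assumes n: "n \<ge> 1" and pv: "pvalid m p" and ab: "\<alpha> \<le> \<beta>"
    and hin: "\<And>k. \<alpha> \<le> k \<Longrightarrow> k \<le> \<beta> \<Longrightarrow> Sid m k \<le> D"
    and hout: "\<And>k1 k2. k1 < \<alpha> \<Longrightarrow> \<beta> < k2 \<Longrightarrow>
                 Sid m k1 + Sid m k2 - (int m + 1) * (k2 - k1 - int n) \<le> 2 * D + 1"
  shows "\<exists>t. Fp m p (r + t * int n) \<le> D"
proof -
  let ?L = "Lx m p"
  define good where "good k \<longleftrightarrow> ?L k mod int n = r mod int n" for k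
  show ?thesis
  proof (cases "\<exists>k. \<alpha> \<le> k \<and> k \<le> \<beta> \<and> good k")
    case True
    then obtain k where k: "\<alpha> \<le> k" "k \<le> \<beta>" "good k" by blast
    have "Fp m p (?L k) \<le> D" using Fp_Lx_le[OF pv, of k] hin[OF k(1,2)] by simp
    then show ?thesis using good_shift[OF n] k(3) unfolding good_def by blast
  next
    case False
    then have nogood: "\<And>k. \<alpha> \<le> k \<Longrightarrow> k \<le> \<beta> \<Longrightarrow> \<not> good k" by blast
    have nn: "int n \<ge> 1" using n by simp
    define k0 where "k0 = r mod int n - int n * (\<bar>\<alpha>\<bar> + 1)"
    have a1: "1 * \<bar>\<alpha>\<bar> \<le> int n * \<bar>\<alpha>\<bar>" by (rule mult_right_mono) (use nn in auto)
    have rm: "r mod int n < int n" using nn by simp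
    have k0a: "k0 < \<alpha>" "k0 < 0" using a1 rm unfolding k0_def by (auto simp: algebra_simps)
    have gk0: "good k0"
    proof -
      have "?L k0 = k0" using k0a by (simp add: Lx_def)
      moreover have "k0 mod int n = r mod int n" unfolding k0_def
        by (metis add_diff_cancel_left' diff_add_cancel mod_mod_trivial mod_mult_self3 mult.commute)
      ultimately show ?thesis by (simp add: good_def)
    qed
    define P1 where "P1 d \<longleftrightarrow> good (\<alpha> - 1 - int d)" for d
    have "P1 (nat (\<alpha> - 1 - k0))" using gk0 k0a by (simp add: P1_def)
    then have P1d: "P1 (Least P1)" by (rule LeastI)
    define k1 where "k1 = \<alpha> - 1 - int (Least P1)"
    have gk1: "good k1" using P1d by (simp add: P1_def k1_def)
    have k1a: "k1 < \<alpha>" by (simp add: k1_def)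
    have n1: "\<not> good k" if "k1 < k" "k < \<alpha>" for k
    proof -
      have "nat (\<alpha> - 1 - k) < Least P1" using that by (simp add: k1_def)
      then have "\<not> P1 (nat (\<alpha> - 1 - k))" by (rule not_less_Least)
      then show ?thesis using that by (simp add: P1_def)
    qed
    define X where "X = \<bar>\<beta>\<bar> + int m + 1"
    have X1: "X \<ge> \<beta> + 1" "X \<ge> int m + 1" unfolding X_def using abs_ge_self[of \<beta>] abs_ge_zero[of \<beta>] by simp_all
    have X2: "1 * X \<le> int n * X" by (rule mult_right_mono) (use nn X1 in auto)
    define k0' where "k0' = (r + int m - p m) mod int n + int n * X"
    have rm2: "0 \<le> (r + int m - p m) mod int n" using nn by simp
    have k0b1: "\<beta> < k0'" using X1 X2 rm2 unfolding k0'_def by linarith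
    have k0b2: "int m < k0'" using X1 X2 rm2 unfolding k0'_def by linarith
    note k0b = k0b1 k0b2
    have gk0': "good k0'"
    proof -
      have "?L k0' = k0' - int m + p m" using k0b by (simp add: Lx_def)
      moreover have "(k0' - int m + p m) mod int n = r mod int n"
      proof -
        have "k0' - int m + p m = (r + int m - p m) mod int n - int m + p m + int n * X"
          unfolding k0'_def by simp
        then have "(k0' - int m + p m) mod int n = ((r + int m - p m) mod int n - int m + p m) mod int n"
          by (metis mod_mult_self2 mult.commute)
        also have "\<dots> = (r + int m - p m - int m + p m) mod int n" by (metis mod_add_left_eq mod_diff_left_eq)
        finally show ?thesis by simp
      qed
      ultimately show ?thesis by (simp add: good_def)
    qed
    define P2 where "P2 d \<longleftrightarrow> good (\<beta> + 1 + int d)" for d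
    have "P2 (nat (k0' - \<beta> - 1))" using gk0' k0b by (simp add: P2_def)
    then have P2d: "P2 (Least P2)" by (rule LeastI)
    define k2 where "k2 = \<beta> + 1 + int (Least P2)"
    have gk2: "good k2" using P2d by (simp add: P2_def k2_def)
    have k2b: "\<beta> < k2" by (simp add: k2_def)
    have n2: "\<not> good k" if "\<beta> < k" "k < k2" for k
    proof -
      have "nat (k - \<beta> - 1) < Least P2" using that by (simp add: k2_def)
      then have "\<not> P2 (nat (k - \<beta> - 1))" by (rule not_less_Least)
      then show ?thesis using that by (simp add: P2_def)
    qed
    have k12: "k1 \<le> k2" using k1a k2b ab by simp
    have dle: "?L k2 - ?L k1 \<le> int n"
    proof (rule ccontr)
      assume "\<not> ?thesis"
      then have "?L k1 \<le> ?L k1 + int n" "?L k1 + int n \<le> ?L k2" using nn by auto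
      then obtain k where k: "k1 \<le> k" "k \<le> k2" "?L k = ?L k1 + int n"
        using Lx_ivt[OF pv k12] by blast
      have gk: "good k" using gk1 k(3) by (simp add: good_def)
      have "k \<noteq> k1" using k(3) nn by auto
      moreover have "k \<noteq> k2" using k(3) \<open>\<not> ?L k2 - ?L k1 \<le> int n\<close> by auto
      ultimately have "k1 < k" "k < k2" using k by auto
      then show False using n1 n2 nogood gk by (meson not_le)
    qed
    have pair: "Fp m p (?L k1) + Fp m p (?L k2) \<le>
         Sid m k1 + Sid m k2 - (int m + 1) * ((k2 - k1) - (?L k2 - ?L k1))"
      by (rule Fp_pair[OF pv k12])
    have "(int m + 1) * ((k2 - k1) - int n) \<le> (int m + 1) * ((k2 - k1) - (?L k2 - ?L k1))"
      by (rule mult_left_mono) (use dle in auto)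
    then have "Fp m p (?L k1) + Fp m p (?L k2) \<le> 2 * D + 1"
      using pair hout[OF k1a k2b] by linarith
    then have "Fp m p (?L k1) \<le> D \<or> Fp m p (?L k2) \<le> D" by linarith
    then show ?thesis using good_shift[OF n] gk1 gk2 unfolding good_def by blast
  qed
qed

lemma ind_sum_id: "(\<Sum>j\<le>m. (if P j then 1 else 0) :: int) \<le> int m + 1"
proof -
  have "(\<Sum>j\<le>m. (if P j then 1 else 0) :: int) \<le> (\<Sum>j\<le>m. 1)" by (rule sum_mono) simp
  then show ?thesis by simp
qed

lemma Fp_left:
  assumes cc: "c \<le> c1" and I: "2 * (\<Sum>j\<le>m. if p j < c1 then 1 else 0) \<le> int m + 1"
  shows "Fp m p c1 \<le> Fp m p c"
proof -
  define d where "d = c1 - c"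
  have d0: "d \<ge> 0" using cc by (simp add: d_def)
  let ?I = "(\<Sum>j\<le>m. if p j < c1 then 1 else 0) :: int"
  have "Fp m p c \<ge> (\<Sum>j\<le>m. \<bar>c1 - p j\<bar> + (d - 2 * d * (if p j < c1 then 1 else 0)))"
    unfolding Fp_def by (rule sum_mono) (auto simp: d_def)
  also have "(\<Sum>j\<le>m. \<bar>c1 - p j\<bar> + (d - 2 * d * (if p j < c1 then 1 else 0))) =
      Fp m p c1 + (d * (int m + 1) - 2 * d * ?I)"
    by (simp add: Fp_def sum.distrib sum_subtractf sum_distrib_left[symmetric] algebra_simps)
  finally have *: "Fp m p c \<ge> Fp m p c1 + d * (int m + 1 - 2 * ?I)" by (simp add: algebra_simps)
  have "d * (int m + 1 - 2 * ?I) \<ge> 0" using d0 I by simp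
  then show ?thesis using * by linarith
qed

lemma Fp_right:
  assumes cc: "c2 \<le> c" and I: "2 * (\<Sum>j\<le>m. if p j > c2 then 1 else 0) \<le> int m + 1"
  shows "Fp m p c2 \<le> Fp m p c"
proof -
  define d where "d = c - c2"
  have d0: "d \<ge> 0" using cc by (simp add: d_def)
  let ?I = "(\<Sum>j\<le>m. if p j > c2 then 1 else 0) :: int"
  have "Fp m p c \<ge> (\<Sum>j\<le>m. \<bar>c2 - p j\<bar> + (d - 2 * d * (if p j > c2 then 1 else 0)))"
    unfolding Fp_def by (rule sum_mono) (auto simp: d_def)
  also have "(\<Sum>j\<le>m. \<bar>c2 - p j\<bar> + (d - 2 * d * (if p j > c2 then 1 else 0))) =
      Fp m p c2 + (d * (int m + 1) - 2 * d * ?I)"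
    by (simp add: Fp_def sum.distrib sum_subtractf sum_distrib_left[symmetric] algebra_simps)
  finally have *: "Fp m p c \<ge> Fp m p c2 + d * (int m + 1 - 2 * ?I)" by (simp add: algebra_simps)
  have "d * (int m + 1 - 2 * ?I) \<ge> 0" using d0 I by simp
  then show ?thesis using * by linarith
qed

lemma LB_general:
  assumes n: "n \<ge> 1"
    and I1: "2 * (\<Sum>j\<le>m. if p j < ca then 1 else 0) \<le> int m + 1"
    and I2: "2 * (\<Sum>j\<le>m. if p j > ca + int n then 1 else 0) \<le> int m + 1"
    and T1: "T \<le> Fp m p ca" and T2: "T \<le> Fp m p (ca + int n)"
  shows "T \<le> Fp m p (ca + t * int n)"
proof (cases "t \<le> 0")
  case True
  have "t * int n \<le> 0" using True by (simp add: mult_nonpos_nonneg)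
  then have "Fp m p ca \<le> Fp m p (ca + t * int n)" by (intro Fp_left I1) simp
  then show ?thesis using T1 by simp
next
  case False
  then have "1 * int n \<le> t * int n" by (intro mult_right_mono) auto
  then have "Fp m p (ca + int n) \<le> Fp m p (ca + t * int n)" by (intro Fp_right I2) simp
  then show ?thesis using T2 by simp
qed

lemma ind_lt: "(\<Sum>j\<le>m. (if int j < c then 1 else 0) :: int) \<le> max 0 c"
proof (induction m)
  case (Suc m)
  have s: "(\<Sum>j\<le>Suc m. (if int j < c then 1 else 0) :: int) =
           (\<Sum>j\<le>m. (if int j < c then 1 else 0)) + (if int (Suc m) < c then 1 else 0)" by simp
  show ?case
  proof (cases "int (Suc m) < c")
    case True
    then show ?thesis using s ind_sum_id[where m=m and P="\<lambda>j. int j < c"] by simp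
  next
    case False
    then show ?thesis using s Suc by simp
  qed
qed simp

lemma ind_gt: "(\<Sum>j\<le>m. (if int j > c then 1 else 0) :: int) \<le> max 0 (int m - c)"
proof (induction m)
  case (Suc m)
  have s: "(\<Sum>j\<le>Suc m. (if int j > c then 1 else 0) :: int) =
           (\<Sum>j\<le>m. (if int j > c then 1 else 0)) + (if int (Suc m) > c then 1 else 0)" by simp
  show ?case using s Suc by (cases "int (Suc m) > c") auto
qed simp

lemma pid_valid: "pvalid m (\<lambda>j. int j)" by (simp add: pvalid_def)
lemma Fp_pid: "Fp m (\<lambda>j. int j) c = Sid m c" by (simp add: Fp_def Sid_def)

definition p2 :: "nat \<Rightarrow> nat \<Rightarrow> int" where
  "p2 i0 j = int j - (if j \<ge> i0 then 1 else 0)"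

lemma p2_valid: "1 \<le> i0 \<Longrightarrow> pvalid m (p2 i0)"
  by (auto simp: pvalid_def p2_def)

lemma Fp_p2: "Fp (Suc q + k) (p2 (Suc q)) c = Sid (q + k) c + \<bar>c - int q\<bar>"
proof (induction k)
  case 0
  have "Fp (Suc q) (p2 (Suc q)) c = (\<Sum>j\<le>q. \<bar>c - p2 (Suc q) j\<bar>) + \<bar>c - p2 (Suc q) (Suc q)\<bar>"
    by (simp add: Fp_def)
  also have "(\<Sum>j\<le>q. \<bar>c - p2 (Suc q) j\<bar>) = Sid q c"
    unfolding Sid_def by (rule sum.cong) (auto simp: p2_def)
  finally show ?case by (simp add: p2_def)
next
  case (Suc k)
  have "Fp (Suc q + Suc k) (p2 (Suc q)) c = Fp (Suc q + k) (p2 (Suc q)) c + \<bar>c - p2 (Suc q) (Suc (Suc q + k))\<bar>"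
    by (simp add: Fp_def)
  moreover have "Sid (q + Suc k) c = Sid (q + k) c + \<bar>c - int (Suc (q + k))\<bar>"
    by (simp add: Sid_def)
  moreover have "p2 (Suc q) (Suc (Suc q + k)) = int (Suc (q + k))" by (simp add: p2_def)
  ultimately show ?case using Suc by simp
qed

lemma ind_p2_lt:
  assumes "ca \<le> int ii - 1"
  shows "(\<Sum>j\<le>m. (if p2 ii j < ca then 1 else 0) :: int) \<le> max 0 ca"
proof -
  have "(\<Sum>j\<le>m. (if p2 ii j < ca then 1 else 0) :: int) \<le> (\<Sum>j\<le>m. (if int j < ca then 1 else 0))"
    by (rule sum_mono) (use assms in \<open>auto simp: p2_def\<close>)
  then show ?thesis using ind_lt[where m=m and c=ca] by simp
qed

lemma ind_p2_gt:
  assumes "cb \<ge> int ii - 1"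
  shows "(\<Sum>j\<le>m. (if p2 ii j > cb then 1 else 0) :: int) \<le> max 0 (int m - cb - 1)"
proof -
  have "(\<Sum>j\<le>m. (if p2 ii j > cb then 1 else 0) :: int) \<le> (\<Sum>j\<le>m. (if int j > cb + 1 then 1 else 0))"
    by (rule sum_mono) (use assms in \<open>auto simp: p2_def\<close>)
  then show ?thesis using ind_gt[where m=m and c="cb + 1"] by simp
qed

lemma ecc_eq:
  assumes n: "n \<ge> 1"
    and UB: "\<And>p r. pvalid m p \<Longrightarrow> \<exists>t. Fp m p (r + t * int n) \<le> int D"
    and LB: "\<exists>p r. pvalid m p \<and> (\<forall>t. Fp m p (r + t * int n) \<ge> int D)"
  shows "yoke_ecc n m (yoke_zero m) = D"
proof -
  let ?S = "{yoke_dist n m (yoke_zero m) v | v. yoke_vert n m v}"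
  have le: "yoke_dist n m (yoke_zero m) v \<le> D" if v: "yoke_vert n m v" for v
  proof -
    obtain f where f: "valid m f" "v = vtx n m f" using vert_vtx[OF n v] by blast
    define p where "p j = f 0 - f j" for j
    have pv: "pvalid m p" using f(1) by (auto simp: pvalid_def p_def valid_def)
    obtain t where t: "Fp m p (f 0 + t * int n) \<le> int D" using UB[OF pv] by blast
    define g where "g = (\<lambda>j. f j + t * int n)"
    have vg: "valid m g" using f(1) by (simp add: valid_def g_def)
    have vv: "vtx n m g = v" unfolding g_def using f(2) vtx_shift[of n m f t] by simp
    have cg: "cost m g = Fp m p (f 0 + t * int n)"
      unfolding cost_def Fp_def g_def p_def by (rule sum.cong) auto
    obtain k where k: "int k \<le> cost m g" "(yoke_adj n m ^^ k) (yoke_zero m) (vtx n m g)"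
      using walk_exists[OF n vg] by blast
    have "yoke_dist n m (yoke_zero m) v \<le> k"
      unfolding yoke_dist_def by (rule Least_le) (use k(2) vv in simp)
    then show ?thesis using k(1) cg t by linarith
  qed
  obtain p r where pr: "pvalid m p" "\<forall>t. Fp m p (r + t * int n) \<ge> int D" using LB by blast
  define f where "f j = r - p j" for j
  have vf: "valid m f" using pr(1) by (auto simp: pvalid_def f_def valid_def)
  let ?v = "vtx n m f"
  have vert: "yoke_vert n m ?v" using vtx_vert[OF n vf] .
  have ge: "yoke_dist n m (yoke_zero m) ?v \<ge> D"
  proof -
    obtain k where "(yoke_adj n m ^^ k) (yoke_zero m) ?v" using walk_exists[OF n vf] by blast
    then have "(yoke_adj n m ^^ (yoke_dist n m (yoke_zero m) ?v)) (yoke_zero m) ?v"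
      unfolding yoke_dist_def by (rule LeastI)
    then obtain g where g: "?v = vtx n m g" "cost m g \<le> int (yoke_dist n m (yoke_zero m) ?v)"
      using walk_cost[OF n] by blast
    have sh: "\<forall>j\<le>m. g j = f j + (g 0 - f 0)" "int n dvd (g 0 - f 0)"
      using vtx_eq_shift[OF n g(1)[symmetric]] by blast+
    obtain t where t: "g 0 - f 0 = int n * t" using sh(2) by (rule dvdE)
    have "cost m g = Fp m p (r + t * int n)"
      unfolding cost_def Fp_def
    proof (rule sum.cong)
      fix j assume "j \<in> {..m}"
      then have "g j = f j + int n * t" using sh(1) t by simp
      then show "\<bar>g j\<bar> = \<bar>r + t * int n - p j\<bar>" by (simp add: f_def algebra_simps)
    qed simp
    moreover have "Fp m p (r + t * int n) \<ge> int D" using pr(2) by blast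
    ultimately have "int D \<le> int (yoke_dist n m (yoke_zero m) ?v)" using g(2) by linarith
    then show ?thesis by simp
  qed
  have fin: "finite ?S"
    by (rule finite_subset[of _ "{..D}"]) (use le in auto)
  have "Max ?S = D"
  proof (rule Max_eqI[OF fin])
    show "y \<le> D" if "y \<in> ?S" for y using that le by auto
    have "yoke_dist n m (yoke_zero m) ?v = D" using le[OF vert] ge by simp
    then show "D \<in> ?S" using vert by blast
  qed
  then show ?thesis unfolding yoke_ecc_def by simp
qed

lemma ch2: "2 * int ((x + 1) choose 2) = int x * (int x + 1)"
proof -
  have "even ((x + 1) * x)" by simp
  then have "2 * ((x + 1) * x div 2) = (x + 1) * x" by simp
  then have "2 * ((x + 1) choose 2) = x * (x + 1)" by (simp add: choose_two)
  then have "int (2 * ((x + 1) choose 2)) = int (x * (x + 1))" by simp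
  then show ?thesis by (simp add: algebra_simps)
qed

lemma case1_UB:
  assumes n: "n = 1" and pv: "pvalid m p"
  shows "\<exists>t. Fp m p (r + t * int n) \<le> int (((m + 1) div 2 + 1 choose 2) + (m div 2 + 1 choose 2))"
proof -
  let ?D = "((m + 1) div 2 + 1 choose 2) + (m div 2 + 1 choose 2)"
  define h where "h = m div 2"
  have mh: "(m + 1) div 2 = m - h" unfolding h_def by linarith
  have hm: "h \<le> m" unfolding h_def by simp
  have "2 * int ?D = int (m - h) * (int (m - h) + 1) + int h * (int h + 1)"
    unfolding mh h_def[symmetric] using ch2[of "m - h"] ch2[of h] by simp
  also have "\<dots> = 2 * Sid m (int h)"
    using Sid_mid[of "int h" m] hm by (simp add: of_nat_diff)
  finally have D: "Sid m (int h) = int ?D" by simp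
  have "Fp m p (Lx m p (int h)) \<le> int ?D" using Fp_Lx_le[OF pv, of "int h"] D by simp
  moreover have "Lx m p (int h) mod int n = r mod int n" using n by simp
  ultimately show ?thesis using good_shift[of n] n by blast
qed

lemma case1_LB:
  assumes n: "n = 1"
  shows "\<exists>p r. pvalid m p \<and> (\<forall>t. int (((m + 1) div 2 + 1 choose 2) + (m div 2 + 1 choose 2)) \<le> Fp m p (r + t * int n))"
proof -
  let ?D = "((m + 1) div 2 + 1 choose 2) + (m div 2 + 1 choose 2)"
  define h where "h = m div 2"
  have mh: "(m + 1) div 2 = m - h" unfolding h_def by linarith
  have hm: "h \<le> m" "m \<le> 2 * h + 1" "2 * h \<le> m" unfolding h_def by auto
  have "2 * int ?D = int (m - h) * (int (m - h) + 1) + int h * (int h + 1)"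
    unfolding mh h_def[symmetric] using ch2[of "m - h"] ch2[of h] by simp
  also have "\<dots> = 2 * Sid m (int h)"
    using Sid_mid[of "int h" m] hm by (simp add: of_nat_diff)
  finally have D: "Sid m (int h) = int ?D" by simp
  have Q1: "2 * Sid m (int h + 1) = (int h + 1) * (int h + 2) + (int m - int h - 1) * (int m - int h)"
    using Sid_mid[of "int h + 1" m] hm by (simp add: algebra_simps)
  have Q0: "2 * Sid m (int h) = int h * (int h + 1) + (int m - int h) * (int m - int h + 1)"
    using Sid_mid[of "int h" m] hm by simp
  have "2 * Sid m (int h + 1) - 2 * Sid m (int h) = 4 * int h + 2 - 2 * int m"
    unfolding Q1 Q0 by (simp add: algebra_simps)
  then have T2: "int ?D \<le> Sid m (int h + 1)" using D hm by linarith
  have I1: "2 * (\<Sum>j\<le>m. if int j < int h then 1 else 0) \<le> int m + 1"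
    using ind_lt[where m=m and c="int h"] hm by simp
  have I2: "2 * (\<Sum>j\<le>m. if int j > int h + int n then 1 else 0) \<le> int m + 1"
    using ind_gt[where m=m and c="int h + 1"] hm n by simp
  have "\<forall>t. int ?D \<le> Fp m (\<lambda>j. int j) (int h + t * int n)"
  proof
    fix t
    show "int ?D \<le> Fp m (\<lambda>j. int j) (int h + t * int n)"
      by (rule LB_general[where n=n and m=m and p="\<lambda>j. int j" and ca="int h"]) (use n I1 I2 D T2 in \<open>simp_all add: Fp_pid\<close>)
  qed
  then show ?thesis using pid_valid by blast
qed

lemma Sid_conc:
  assumes "0 \<le> a" "a \<le> k" "k \<le> b" "a + b = int m"
  shows "Sid m k \<le> Sid m a"
proof -
  have Qk: "2 * Sid m k = k * (k + 1) + (int m - k) * (int m - k + 1)"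
    using Sid_mid[of k m] assms by simp
  have Qa: "2 * Sid m a = a * (a + 1) + (int m - a) * (int m - a + 1)"
    using Sid_mid[of a m] assms by simp
  have "2 * Sid m a - 2 * Sid m k = 2 * ((k - a) * (b - k))"
    unfolding Qk Qa assms(4)[symmetric] by (simp add: algebra_simps)
  moreover have "(k - a) * (b - k) \<ge> 0" using assms by simp
  ultimately show ?thesis by linarith
qed

lemma div2_le: "2 * (x::int) \<le> N \<Longrightarrow> x \<le> N div 2" by presburger
lemma div2_ge: "(N::int) \<le> 2 * (N div 2) + 1" by presburger
lemma div2_ge2: "2 * ((N::int) div 2) \<le> N" by presburger

lemma case2_UB:
  assumes n: "n \<ge> 1" and mn: "m \<le> n" and pv: "pvalid m p"
  shows "\<exists>t. Fp m p (r + t * int n) \<le> int (n * (m + 1) div 2)"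
proof -
  have Dint: "int (n * (m + 1) div 2) = (int n * (int m + 1)) div 2" by (simp add: zdiv_int algebra_simps)
  show ?thesis
  proof (rule UB_general[OF n pv, of 0 "int m"])
    show "0 \<le> int m" by simp
  next
    fix k assume k: "0 \<le> k" "k \<le> int m"
    have "Sid m k \<le> Sid m 0" by (rule Sid_conc) (use k in auto)
    moreover have "2 * Sid m 0 = int m * (int m + 1)" using Sid_left[of 0 m] by simp
    moreover have "int m * (int m + 1) \<le> int n * (int m + 1)" using mn by (intro mult_right_mono) auto
    ultimately have "2 * Sid m k \<le> int n * (int m + 1)" by linarith
    then show "Sid m k \<le> int (n * (m + 1) div 2)" unfolding Dint by (rule div2_le)
  next
    fix k1 k2 :: int assume k: "k1 < 0" "int m < k2"
    have A: "2 * Sid m k1 = (int m + 1) * (int m - 2 * k1)" using Sid_left[of k1 m] k by simp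
    have B: "2 * Sid m k2 = (int m + 1) * (2 * k2 - int m)" using Sid_right[of m k2] k by simp
    have "2 * (Sid m k1 + Sid m k2 - (int m + 1) * (k2 - k1 - int n)) = 2 * (int n * (int m + 1))"
      using A B by (simp add: algebra_simps)
    then have "Sid m k1 + Sid m k2 - (int m + 1) * (k2 - k1 - int n) = int n * (int m + 1)" by simp
    then show "Sid m k1 + Sid m k2 - (int m + 1) * (k2 - k1 - int n) \<le> 2 * int (n * (m + 1) div 2) + 1"
      unfolding Dint using div2_ge[of "int n * (int m + 1)"] by linarith
  qed
qed

lemma case2_LB:
  assumes n: "n \<ge> 1" and mn: "m \<le> n"
  shows "\<exists>p r. pvalid m p \<and> (\<forall>t. int (n * (m + 1) div 2) \<le> Fp m p (r + t * int n))"
proof -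
  have Dint: "int (n * (m + 1) div 2) = (int n * (int m + 1)) div 2" by (simp add: zdiv_int algebra_simps)
  have D2: "2 * int (n * (m + 1) div 2) \<le> int n * (int m + 1)" unfolding Dint by (rule div2_ge2)
  obtain e where e: "n - m = 2 * e \<or> n - m = 2 * e + 1" by (metis dvd_mult_div_cancel odd_two_times_div_two_succ even_iff_mod_2_eq_zero)
  consider "n - m = 2 * e" | "n - m = 2 * e + 1 \<and> m = 0" | "n - m = 2 * e + 1 \<and> m \<ge> 1" using e by linarith
  then show ?thesis
  proof cases
    case 1
    then have ne: "int n = int m + 2 * int e" using mn by linarith
    let ?c = "- int e"
    have T1: "2 * Sid m ?c = (int m + 1) * (int m + 2 * int e)" using Sid_left[of ?c m] by simp
    have T2: "2 * Sid m (?c + int n) = (int m + 1) * (int m + 2 * int e)"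
      using Sid_right[of m "?c + int n"] ne by (simp add: algebra_simps)
    have "\<forall>t. int (n * (m + 1) div 2) \<le> Fp m (\<lambda>j. int j) (?c + t * int n)"
    proof
      fix t
      show "int (n * (m + 1) div 2) \<le> Fp m (\<lambda>j. int j) (?c + t * int n)"
      proof (rule LB_general[where n=n and m=m and p="\<lambda>j. int j" and ca="?c"])
        show "2 * (\<Sum>j\<le>m. if int j < ?c then 1 else 0) \<le> int m + 1"
          using ind_lt[where m=m and c="?c"] by simp
        show "2 * (\<Sum>j\<le>m. if int j > ?c + int n then 1 else 0) \<le> int m + 1"
          using ind_gt[where m=m and c="?c + int n"] ne by simp
        show "int (n * (m + 1) div 2) \<le> Fp m (\<lambda>j. int j) ?c"
          using T1 D2 ne by (simp add: Fp_pid algebra_simps)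
        show "int (n * (m + 1) div 2) \<le> Fp m (\<lambda>j. int j) (?c + int n)"
          using T2 D2 ne by (simp add: Fp_pid algebra_simps)
      qed (use n in simp)
    qed
    then show ?thesis using pid_valid by blast
  next
    case 2
    then have ne: "int n = 2 * int e + 1" "m = 0" by auto
    let ?c = "- int e"
    have "\<forall>t. int (n * (m + 1) div 2) \<le> Fp m (\<lambda>j. int j) (?c + t * int n)"
    proof
      fix t
      show "int (n * (m + 1) div 2) \<le> Fp m (\<lambda>j. int j) (?c + t * int n)"
      proof (rule LB_general[where n=n and m=m and p="\<lambda>j. int j" and ca="?c"])
        show "2 * (\<Sum>j\<le>m. if int j < ?c then 1 else 0) \<le> int m + 1"
          using ne by simp
        show "2 * (\<Sum>j\<le>m. if int j > ?c + int n then 1 else 0) \<le> int m + 1"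
          using ne by simp
        show "int (n * (m + 1) div 2) \<le> Fp m (\<lambda>j. int j) ?c"
          using ne Dint by (simp add: Fp_pid Sid_def)
        show "int (n * (m + 1) div 2) \<le> Fp m (\<lambda>j. int j) (?c + int n)"
          using ne Dint by (simp add: Fp_pid Sid_def)
      qed (use n in simp)
    qed
    then show ?thesis using pid_valid by blast
  next
    case 3
    define q where "q = (m - 1) div 2"
    define k where "k = m - 1 - q"
    have qm: "q \<le> m - 1" unfolding q_def by simp
    have mq: "m = Suc q + k" unfolding k_def using qm 3 by linarith
    have "n = q + k + 2 * e + 2" using 3 mn mq by linarith
    then have ne: "int n = int (q + k) + 2 * (int e + 1)" by simp
    have qk: "q + k = 2 * q \<or> q + k = 2 * q + 1" unfolding k_def q_def using 3 by linarith
    let ?p = "p2 (Suc q)"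
    let ?c = "- (int e + 1)"
    have F1: "Fp m ?p ?c = Sid (q + k) ?c + \<bar>?c - int q\<bar>" using Fp_p2 mq by simp
    have F2: "Fp m ?p (?c + int n) = Sid (q + k) (?c + int n) + \<bar>?c + int n - int q\<bar>" using Fp_p2 mq by simp
    have S1: "2 * Sid (q + k) ?c = (int (q + k) + 1) * (int (q + k) + 2 * (int e + 1))"
      using Sid_left[of ?c "q + k"] by simp
    have S2: "2 * Sid (q + k) (?c + int n) = (int (q + k) + 1) * (int (q + k) + 2 * (int e + 1))"
      using Sid_right[of "q + k" "?c + int n"] ne by (simp add: algebra_simps)
    have Nval: "int n * (int m + 1) = (int (q + k) + 1) * (int (q + k) + 2 * (int e + 1)) + int (q + k) + 2 * (int e + 1)"
      using ne mq by (simp add: algebra_simps)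
    have T1: "int (n * (m + 1) div 2) \<le> Fp m ?p ?c"
    proof -
      have "2 * Fp m ?p ?c = (int (q + k) + 1) * (int (q + k) + 2 * (int e + 1)) + 2 * int q + 2 * (int e + 1)"
        using F1 S1 by simp
      show ?thesis
      proof (cases "q + k = 2 * q")
        case True
        then have "2 * Fp m ?p ?c = int n * (int m + 1)" using \<open>2 * Fp m ?p ?c = _\<close> Nval by simp
        then show ?thesis using D2 by linarith
      next
        case False
        then have kq: "q + k = 2 * q + 1" using qk by simp
        have "int n * (int m + 1) = 2 * (Fp m ?p ?c) + 1"
          using \<open>2 * Fp m ?p ?c = _\<close> Nval kq by simp
        then have "int (n * (m + 1) div 2) = Fp m ?p ?c" unfolding Dint by simp
        then show ?thesis by simp
      qed
    qed
    have T2: "int (n * (m + 1) div 2) \<le> Fp m ?p (?c + int n)"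
    proof -
      have "2 * Fp m ?p (?c + int n) = (int (q + k) + 1) * (int (q + k) + 2 * (int e + 1)) + 2 * (int (q + k) + (int e + 1) - int q)"
        using F2 S2 ne by simp
      then have "2 * Fp m ?p (?c + int n) \<ge> int n * (int m + 1)" using Nval qk by auto
      then show ?thesis using D2 by linarith
    qed
    have "\<forall>t. int (n * (m + 1) div 2) \<le> Fp m ?p (?c + t * int n)"
    proof
      fix t
      show "int (n * (m + 1) div 2) \<le> Fp m ?p (?c + t * int n)"
      proof (rule LB_general[where n=n and m=m and p="?p" and ca="?c"])
        show "2 * (\<Sum>j\<le>m. if ?p j < ?c then 1 else 0) \<le> int m + 1"
          using ind_p2_lt[where m=m and ca="?c" and ii="Suc q"] by simp
        show "2 * (\<Sum>j\<le>m. if ?p j > ?c + int n then 1 else 0) \<le> int m + 1"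
          using ind_p2_gt[where m=m and cb="?c + int n" and ii="Suc q"] ne mq by simp
      qed (use n T1 T2 in simp_all)
    qed
    moreover have "pvalid m ?p" by (rule p2_valid) simp
    ultimately show ?thesis by blast
  qed
qed

lemma case3_UB:
  assumes n: "2 \<le> n" "n \<le> m" and pv: "pvalid m p" and me: "m = n + 2*e + s" "s \<le> 1"
    and D1: "int d0 \<le> int D"
    and D2: "2 * int d0 + 2 * (int n - int s + 1) - (int m + 1) * (2 - int s) \<le> 2 * int D + 1"
    and d0: "2 * int d0 = (int n + int e) * (int n + int e + 1) + (int e + int s) * (int e + int s + 1)"
  shows "\<exists>t. Fp m p (r + t * int n) \<le> int D"
proof -
  define a where "a = int e + int s"
  define b where "b = int n + int e"
  have ab: "a + b = int m" using me by (simp add: a_def b_def)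
  have a0: "0 \<le> a" "a \<le> b" using n me by (auto simp: a_def b_def)
  have bm: "b \<le> int m" using ab a0 by simp
  have Sa: "Sid m a = int d0"
  proof -
    have "2 * Sid m a = a * (a + 1) + (int m - a) * (int m - a + 1)" using Sid_mid[of a m] a0 bm by simp
    also have "int m - a = b" using ab by simp
    finally show ?thesis using d0 by (simp add: a_def b_def algebra_simps)
  qed
  show ?thesis
  proof (rule UB_general[where \<alpha>=a and \<beta>=b, OF _ pv])
    show "1 \<le> n" using n by simp
    show "a \<le> b" using a0 by simp
  next
    fix k assume k: "a \<le> k" "k \<le> b"
    have "Sid m k \<le> Sid m a" by (rule Sid_conc) (use k a0 ab in auto)
    then show "Sid m k \<le> int D" using Sa D1 by simp
  next
    fix k1 k2 :: int assume k: "k1 < a" "b < k2"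
    have L1: "Sid m k1 \<le> Sid m (a - 1) + (int m + 1) * (a - 1 - k1)"
      using Sid_lip[of m k1 "a - 1"] k by simp
    have L2: "Sid m k2 \<le> Sid m (b + 1) + (int m + 1) * (k2 - b - 1)"
      using Sid_lip[of m k2 "b + 1"] k by (simp add: diff_diff_eq)
    have Q1: "2 * Sid m (a - 1) = (a - 1) * a + (b + 1) * (b + 2)"
    proof -
      have "2 * Sid m (a - 1) = (a - 1) * (a - 1 + 1) + (int m - (a - 1)) * (int m - (a - 1) + 1)"
        using Sid_mid[of "a - 1" m] a0 bm by simp
      also have "int m - (a - 1) = b + 1" using ab by simp
      finally show ?thesis by (simp add: algebra_simps)
    qed
    have Q2: "2 * Sid m (b + 1) = (a - 1) * a + (b + 1) * (b + 2)"
    proof -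
      have "2 * Sid m (b + 1) = (b + 1) * (b + 1 + 1) + (int m - (b + 1)) * (int m - (b + 1) + 1)"
        using Sid_mid[of "b + 1" m] a0 bm by simp
      also have "int m - (b + 1) = a - 1" using ab by simp
      finally show ?thesis by (simp add: algebra_simps)
    qed
    have S12: "Sid m (a - 1) + Sid m (b + 1) = 2 * int d0 + 2 * (int n - int s + 1)"
    proof -
      have "2 * (Sid m (a - 1) + Sid m (b + 1)) = 2 * ((a - 1) * a + (b + 1) * (b + 2))" using Q1 Q2 by simp
      also have "(a - 1) * a + (b + 1) * (b + 2) = 2 * int d0 + 2 * (int n - int s + 1)"
        unfolding d0 a_def b_def by (simp add: algebra_simps)
      finally show ?thesis by simp
    qed
    have E: "(int m + 1) * (a - 1 - k1) + (int m + 1) * (k2 - b - 1) - (int m + 1) * (k2 - k1 - int n)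
           = - ((int m + 1) * (2 - int s))"
      unfolding a_def b_def by (simp add: algebra_simps)
    show "Sid m k1 + Sid m k2 - (int m + 1) * (k2 - k1 - int n) \<le> 2 * int D + 1"
      using L1 L2 S12 E D2 by linarith
  qed
qed

lemma case3_LBa:
  assumes n: "2 \<le> n" "n \<le> m" and me: "m = n + 2*e + s" "s \<le> 1"
    and d0: "2 * int d0 = (int n + int e) * (int n + int e + 1) + (int e + int s) * (int e + int s + 1)"
  shows "\<exists>p r. pvalid m p \<and> (\<forall>t. int d0 \<le> Fp m p (r + t * int n))"
proof -
  define a where "a = int e + int s"
  have s01: "s = 0 \<or> s = 1" using me by auto
  have T1: "int d0 \<le> Sid m a"
  proof -
    have "2 * Sid m a = a * (a + 1) + (int m - a) * (int m - a + 1)" using Sid_mid[of a m] me by (simp add: a_def)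
    also have "int m - a = int n + int e" using me by (simp add: a_def)
    finally show ?thesis using d0 by (simp add: a_def algebra_simps)
  qed
  have T2: "int d0 \<le> Sid m (a + int n)"
  proof -
    have "2 * Sid m (a + int n) = (a + int n) * (a + int n + 1) + (int m - (a + int n)) * (int m - (a + int n) + 1)"
      using Sid_mid[of "a + int n" m] me by (simp add: a_def)
    also have "int m - (a + int n) = int e" using me by (simp add: a_def)
    finally have *: "2 * Sid m (a + int n) = (a + int n) * (a + int n + 1) + int e * (int e + 1)" .
    show ?thesis
    proof (cases "s = 0")
      case True
      then show ?thesis using * d0 by (simp add: a_def algebra_simps)
    next
      case False
      then have "s = 1" using s01 by simp
      then have "2 * Sid m (a + int n) = 2 * int d0 + 2 * int n" using * d0 by (simp add: a_def algebra_simps)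
      then show ?thesis by simp
    qed
  qed
  have "\<forall>t. int d0 \<le> Fp m (\<lambda>j. int j) (a + t * int n)"
  proof
    fix t
    show "int d0 \<le> Fp m (\<lambda>j. int j) (a + t * int n)"
    proof (rule LB_general[where n=n and m=m and p="\<lambda>j. int j" and ca="a"])
      show "2 * (\<Sum>j\<le>m. if int j < a then 1 else 0) \<le> int m + 1"
        using ind_lt[where m=m and c="a"] me n by (simp add: a_def)
      show "2 * (\<Sum>j\<le>m. if int j > a + int n then 1 else 0) \<le> int m + 1"
        using ind_gt[where m=m and c="a + int n"] me by (simp add: a_def)
    qed (use n T1 T2 in \<open>simp_all add: Fp_pid\<close>)
  qed
  then show ?thesis using pid_valid by blast
qed

lemma case3_LBb:
  assumes n: "2 \<le> n" "n \<le> m" and me: "m = n + 2*e + 1"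
    and d0: "2 * int d0 = (int n + int e) * (int n + int e + 1) + (int e + 1) * (int e + 1 + 1)"
  shows "\<exists>p r. pvalid m p \<and> (\<forall>t. int d0 + int n - int ((m + 2) div 2) \<le> Fp m p (r + t * int n))"
proof -
  define h where "h = n div 2"
  define t0 where "t0 = n mod 2"
  have nh: "n = 2 * h + t0" "t0 \<le> 1" unfolding h_def t0_def by presburger+
  define q where "q = (m - 1) div 2"
  define k where "k = m - 1 - q"
  have qv: "q = e + h" unfolding q_def using me nh by presburger
  have mq: "m = Suc q + k" unfolding k_def using qv me nh by linarith
  have qk: "q + k = n + 2 * e" using mq me by linarith
  have Mv: "(m + 2) div 2 = e + h + 1 + t0" using me nh by presburger
  let ?p = "p2 (Suc q)"
  let ?D = "int d0 + int n - int ((m + 2) div 2)"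
  have F1: "Fp m ?p (int e) = Sid (q + k) (int e) + \<bar>int e - int q\<bar>" using Fp_p2 mq by simp
  have F2: "Fp m ?p (int e + int n) = Sid (q + k) (int e + int n) + \<bar>int e + int n - int q\<bar>" using Fp_p2 mq by simp
  have S1: "2 * Sid (q + k) (int e) = int e * (int e + 1) + (int n + int e) * (int n + int e + 1)"
  proof -
    have "2 * Sid (q + k) (int e) = int e * (int e + 1) + (int (q + k) - int e) * (int (q + k) - int e + 1)"
      using Sid_mid[of "int e" "q + k"] qk by simp
    also have "int (q + k) - int e = int n + int e" using qk by simp
    finally show ?thesis .
  qed
  have S2: "2 * Sid (q + k) (int e + int n) = int e * (int e + 1) + (int n + int e) * (int n + int e + 1)"
  proof -
    have "2 * Sid (q + k) (int e + int n) = (int e + int n) * (int e + int n + 1) + (int (q + k) - (int e + int n)) * (int (q + k) - (int e + int n) + 1)"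
      using Sid_mid[of "int e + int n" "q + k"] qk by simp
    also have "int (q + k) - (int e + int n) = int e" using qk by simp
    finally show ?thesis by (simp add: algebra_simps)
  qed
  have T1: "?D \<le> Fp m ?p (int e)"
  proof -
    have "2 * Fp m ?p (int e) = int e * (int e + 1) + (int n + int e) * (int n + int e + 1) + 2 * int h"
      using F1 S1 qv by simp
    moreover have "2 * ?D = (int n + int e) * (int n + int e + 1) + (int e + 1) * (int e + 1 + 1) + 2 * int n - 2 * (int e + int h + 1 + int t0)"
      using d0 Mv by simp
    ultimately have "2 * Fp m ?p (int e) = 2 * ?D" using nh by (simp add: algebra_simps)
    then show ?thesis by simp
  qed
  have T2: "?D \<le> Fp m ?p (int e + int n)"
  proof -
    have "2 * Fp m ?p (int e + int n) = int e * (int e + 1) + (int n + int e) * (int n + int e + 1) + 2 * (int n - int h)"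
      using F2 S2 qv nh by simp
    moreover have "2 * Fp m ?p (int e) = int e * (int e + 1) + (int n + int e) * (int n + int e + 1) + 2 * int h"
      using F1 S1 qv by simp
    moreover have "2 * int h \<le> int n" using nh by simp
    moreover have "2 * int h \<le> 2 * (int n - int h)" using \<open>2 * int h \<le> int n\<close> by presburger
    ultimately have "2 * Fp m ?p (int e + int n) \<ge> 2 * Fp m ?p (int e)"
      by (simp only:)
    then show ?thesis using T1 by linarith
  qed
  have "\<forall>t. ?D \<le> Fp m ?p (int e + t * int n)"
  proof
    fix t
    show "?D \<le> Fp m ?p (int e + t * int n)"
    proof (rule LB_general[where n=n and m=m and p="?p" and ca="int e"])
      show "2 * (\<Sum>j\<le>m. if ?p j < int e then 1 else 0) \<le> int m + 1"
        using ind_p2_lt[where m=m and ca="int e" and ii="Suc q"] qv me by simp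
      show "2 * (\<Sum>j\<le>m. if ?p j > int e + int n then 1 else 0) \<le> int m + 1"
        using ind_p2_gt[where m=m and cb="int e + int n" and ii="Suc q"] qv me nh by simp
    qed (use n T1 T2 in simp_all)
  qed
  moreover have "pvalid m ?p" by (rule p2_valid) simp
  ultimately show ?thesis by blast
qed

theorem theorem4p1:
  fixes n m :: nat
  assumes "n \<ge> 1"
  shows "(n = 1 \<longrightarrow>
            yoke_ecc n m (yoke_zero m) =
              (((m + 1) div 2 + 1) choose 2) + ((m div 2 + 1) choose 2))
       \<and> (m \<le> n \<longrightarrow> yoke_ecc n m (yoke_zero m) = n * (m + 1) div 2)
       \<and> (2 \<le> n \<and> n \<le> m \<longrightarrow>
            (let d0 = (((m + n) div 2 + 1) choose 2) + (((m - n + 1) div 2 + 1) choose 2)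
             in (2 dvd (m - n) \<or> n \<le> (m + 2) div 2 \<longrightarrow> yoke_ecc n m (yoke_zero m) = d0)
              \<and> (\<not> (2 dvd (m - n) \<or> n \<le> (m + 2) div 2) \<longrightarrow>
                   yoke_ecc n m (yoke_zero m) = d0 + n - (m + 2) div 2)))"
proof (intro conjI impI)
  assume n1: "n = 1"
  show "yoke_ecc n m (yoke_zero m) = (((m + 1) div 2 + 1) choose 2) + ((m div 2 + 1) choose 2)"
  proof (rule ecc_eq[OF assms])
    show "\<exists>t. Fp m p (r + t * int n) \<le> int (((m + 1) div 2 + 1 choose 2) + (m div 2 + 1 choose 2))"
      if "pvalid m p" for p r using case1_UB[OF n1 that] .
    show "\<exists>p r. pvalid m p \<and> (\<forall>t. int (((m + 1) div 2 + 1 choose 2) + (m div 2 + 1 choose 2)) \<le> Fp m p (r + t * int n))"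
      using case1_LB[OF n1] .
  qed
next
  assume mn: "m \<le> n"
  show "yoke_ecc n m (yoke_zero m) = n * (m + 1) div 2"
  proof (rule ecc_eq[OF assms])
    show "\<exists>t. Fp m p (r + t * int n) \<le> int (n * (m + 1) div 2)"
      if "pvalid m p" for p r using case2_UB[OF assms mn that] .
    show "\<exists>p r. pvalid m p \<and> (\<forall>t. int (n * (m + 1) div 2) \<le> Fp m p (r + t * int n))"
      using case2_LB[OF assms mn] .
  qed
next
  assume nm: "2 \<le> n \<and> n \<le> m"
  then have n2: "2 \<le> n" and nm': "n \<le> m" by auto
  define e where "e = (m - n) div 2"
  define s where "s = (m - n) mod 2"
  have me: "m = n + 2 * e + s" "s \<le> 1"
    using div_mult_mod_eq[of "m - n" 2] mod_less_divisor[of 2 "m - n"] nm' unfolding e_def s_def by linarith+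
  have s01: "s = 0 \<or> s = 1" using me by auto
  define d0 where "d0 = (((m + n) div 2 + 1) choose 2) + (((m - n + 1) div 2 + 1) choose 2)"
  have dv1: "(m + n) div 2 = n + e" "(m - n + 1) div 2 = e + s"
  proof -
    have a: "m + n = 2 * (n + e) + s" "m - n + 1 = 2 * e + s + 1" using me by simp_all
    show "(m + n) div 2 = n + e" unfolding a(1) using s01 by auto
    show "(m - n + 1) div 2 = e + s" unfolding a(2) using s01 by auto
  qed
  have d0f: "2 * int d0 = (int n + int e) * (int n + int e + 1) + (int e + int s) * (int e + int s + 1)"
    unfolding d0_def dv1 using ch2[of "n + e"] ch2[of "e + s"] by (simp add: algebra_simps)
  have dvd_s: "2 dvd (m - n) \<longleftrightarrow> s = 0" unfolding s_def by (simp add: dvd_eq_mod_eq_0)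
  have M2: "2 * ((m + 2) div 2) \<le> m + 2" "m + 1 \<le> 2 * ((m + 2) div 2)"
    using div_mult_mod_eq[of "m + 2" 2] mod_less_divisor[of 2 "m + 2"] by linarith+
  have A: "yoke_ecc n m (yoke_zero m) = d0" if c: "2 dvd (m - n) \<or> n \<le> (m + 2) div 2"
  proof (rule ecc_eq[OF assms])
    show "\<exists>t. Fp m p (r + t * int n) \<le> int d0" if "pvalid m p" for p r
    proof (rule case3_UB[OF n2 nm' that me _ _ d0f])
      show "int d0 \<le> int d0" by simp
      show "2 * int d0 + 2 * (int n - int s + 1) - (int m + 1) * (2 - int s) \<le> 2 * int d0 + 1"
      proof (cases "s = 0")
        case True
        then show ?thesis using nm' by simp
      next
        case False
        then have "s = 1" using me by simp
        moreover have "n \<le> (m + 2) div 2" using c dvd_s False by simp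
        ultimately show ?thesis using M2 by simp
      qed
    qed
    show "\<exists>p r. pvalid m p \<and> (\<forall>t. int d0 \<le> Fp m p (r + t * int n))"
      by (rule case3_LBa[OF n2 nm' me d0f])
  qed
  have B: "yoke_ecc n m (yoke_zero m) = d0 + n - (m + 2) div 2" if c: "\<not> (2 dvd (m - n) \<or> n \<le> (m + 2) div 2)"
  proof -
    have s1: "s = 1" using c dvd_s me by auto
    have nM: "(m + 2) div 2 < n" using c by simp
    have Dint: "int (d0 + n - (m + 2) div 2) = int d0 + int n - int ((m + 2) div 2)" using nM by simp
    show ?thesis
    proof (rule ecc_eq[OF assms])
      show "\<exists>t. Fp m p (r + t * int n) \<le> int (d0 + n - (m + 2) div 2)" if "pvalid m p" for p r
      proof (rule case3_UB[OF n2 nm' that me _ _ d0f])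
        show "int d0 \<le> int (d0 + n - (m + 2) div 2)" using nM by simp
        show "2 * int d0 + 2 * (int n - int s + 1) - (int m + 1) * (2 - int s) \<le> 2 * int (d0 + n - (m + 2) div 2) + 1"
          unfolding Dint using s1 M2 by simp
      qed
      have me1: "m = n + 2 * e + 1" using me s1 by simp
      have d0f1: "2 * int d0 = (int n + int e) * (int n + int e + 1) + (int e + 1) * (int e + 1 + 1)"
        using d0f s1 by simp
      show "\<exists>p r. pvalid m p \<and> (\<forall>t. int (d0 + n - (m + 2) div 2) \<le> Fp m p (r + t * int n))"
        unfolding Dint by (rule case3_LBb[OF n2 nm' me1 d0f1])
    qed
  qed
  show "let d0 = (((m + n) div 2 + 1) choose 2) + (((m - n + 1) div 2 + 1) choose 2)
             in (2 dvd (m - n) \<or> n \<le> (m + 2) div 2 \<longrightarrow> yoke_ecc n m (yoke_zero m) = d0)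
              \<and> (\<not> (2 dvd (m - n) \<or> n \<le> (m + 2) div 2) \<longrightarrow>
                   yoke_ecc n m (yoke_zero m) = d0 + n - (m + 2) div 2)"
    unfolding Let_def d0_def[symmetric] using A B by blast
qed

end
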